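(* Let $n \ge 1$ and let $L$ be an $n \times n$ Latin square with rows, columns and symbols indexed by $\{0,1,\dots,n-1\}$. Then $$\sum_{0 \le r_1 < r_2 \le n-1} d(r_1,r_2) = \frac{n^2(n^2-1)}{6},$$ where $d(r_1,r_2) = \sum_{s=0}^{n-1} \lvert \mathrm{pos}(r_1,s) - \mathrm{pos}(r_2,s) \rvert$.
   Context: An $n \times n$ Latin square is an $n\times n$ array with entries in $\{0,\dots,n-1\}$ in which each symbol occurs exactly once in each row and exactly once in each column. Rows and columns are indexed by $\{0,\dots,n-1\}$. For a row $r$ and a symbol $s$, $\mathrm{pos}(r,s) \in \{0,\dots,n-1\}$ denotes the column in which symbol $s$ appears in row $r$. The absolute value $\lvert \mathrm{pos}(r_1,s) - \mathrm{pos}(r_2,s)\rvert$ is taken as ordinary integers. *)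

theory Defs
  imports Complex_Main
begin

definition latin_square :: "nat \<Rightarrow> (nat \<Rightarrow> nat \<Rightarrow> nat) \<Rightarrow> bool" where
  "latin_square n L \<longleftrightarrow>
     (\<forall>r<n. \<forall>c<n. L r c < n) \<and>
     (\<forall>r<n. \<forall>s<n. \<exists>!c. c < n \<and> L r c = s) \<and>
     (\<forall>c<n. \<forall>s<n. \<exists>!r. r < n \<and> L r c = s)"

definition pos :: "nat \<Rightarrow> (nat \<Rightarrow> nat \<Rightarrow> nat) \<Rightarrow> nat \<Rightarrow> nat \<Rightarrow> nat" where
  "pos n L r s = (THE c. c < n \<and> L r c = s)"

definition row_dist :: "nat \<Rightarrow> (nat \<Rightarrow> nat \<Rightarrow> nat) \<Rightarrow> nat \<Rightarrow> nat \<Rightarrow> int" where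
  "row_dist n L r1 r2 = (\<Sum>s<n. \<bar>int (pos n L r1 s) - int (pos n L r2 s)\<bar>)"

end

theory Submission
  imports Defs
begin

lemma sym_pair_sum:
  fixes f :: "nat \<Rightarrow> nat \<Rightarrow> int"
  assumes sym: "\<And>a b. f a b = f b a" and diag: "\<And>a. f a a = 0"
  shows "2 * (\<Sum>(a, b) \<in> {(a, b). a < b \<and> b < n}. f a b) = (\<Sum>a<n. \<Sum>b<n. f a b)"
proof -
  let ?P = "{(a, b). a < b \<and> b < n}"
  let ?Q = "{(a, b). b < a \<and> a < n}"
  let ?D = "{(a, b). a = b \<and> a < n}"
  have fin: "finite ({..<n} \<times> {..<n})" by simp
  have PQD: "{..<n} \<times> {..<n} = ?P \<union> ?Q \<union> ?D" by auto
  have fP: "finite ?P" by (rule finite_subset[OF _ fin]) auto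
  have fQ: "finite ?Q" by (rule finite_subset[OF _ fin]) auto
  have fD: "finite ?D" by (rule finite_subset[OF _ fin]) auto
  have "(\<Sum>a<n. \<Sum>b<n. f a b) = (\<Sum>x\<in>{..<n} \<times> {..<n}. case_prod f x)"
    by (simp add: sum.cartesian_product)
  also have "\<dots> = (\<Sum>x\<in>?P \<union> ?Q. case_prod f x) + (\<Sum>x\<in>?D. case_prod f x)"
    unfolding PQD by (rule sum.union_disjoint) (use fP fQ fD in auto)
  also have "(\<Sum>x\<in>?D. case_prod f x) = 0"
    by (rule sum.neutral) (auto simp: diag)
  also have "(\<Sum>x\<in>?P \<union> ?Q. case_prod f x) = (\<Sum>x\<in>?P. case_prod f x) + (\<Sum>x\<in>?Q. case_prod f x)"
    by (rule sum.union_disjoint) (use fP fQ in auto)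
  also have "(\<Sum>x\<in>?Q. case_prod f x) = (\<Sum>x\<in>?P. case_prod f x)"
  proof -
    have "?Q = prod.swap ` ?P" by auto
    then have "(\<Sum>x\<in>?Q. case_prod f x) = (\<Sum>x\<in>?P. case_prod f (prod.swap x))"
      by (simp add: sum.reindex)
    also have "\<dots> = (\<Sum>x\<in>?P. case_prod f x)"
      by (rule sum.cong) (auto simp: sym)
    finally show ?thesis .
  qed
  finally show ?thesis by simp
qed

lemma abs_sum_formula:
  "3 * (\<Sum>a<n. \<Sum>b<n. \<bar>int a - int b\<bar>) = (int n - 1) * int n * (int n + 1)"
proof (induction n)
  case 0
  then show ?case by simp
next
  case (Suc n)
  have row: "(\<Sum>b<n. \<bar>int n - int b\<bar>) = (\<Sum>b<n. int n - int b)"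
    by (rule sum.cong) auto
  have row2: "(\<Sum>b<n. \<bar>int b - int n\<bar>) = (\<Sum>b<n. int n - int b)"
    by (rule sum.cong) auto
  have tri: "2 * (\<Sum>b<n. int n - int b) = int n * (int n + 1)"
  proof (induction n)
    case 0 then show ?case by simp
  next
    case (Suc m)
    have "(\<Sum>b<Suc m. int (Suc m) - int b) = (\<Sum>b<m. int m - int b) + int (Suc m)"
    proof -
      have "(\<Sum>b<Suc m. int (Suc m) - int b) = (\<Sum>b<m. int (Suc m) - int b) + 1" by simp
      also have "(\<Sum>b<m. int (Suc m) - int b) = (\<Sum>b<m. (int m - int b) + 1)"
        by (rule sum.cong) auto
      also have "\<dots> = (\<Sum>b<m. int m - int b) + int m" by (simp add: sum.distrib)
      finally show ?thesis by simp
    qed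
    then show ?case using Suc by (simp add: algebra_simps)
  qed
  have "(\<Sum>a<Suc n. \<Sum>b<Suc n. \<bar>int a - int b\<bar>)
      = (\<Sum>a<n. \<Sum>b<n. \<bar>int a - int b\<bar>) + (\<Sum>a<n. \<bar>int a - int n\<bar>) + (\<Sum>b<n. \<bar>int n - int b\<bar>)"
    by (simp add: sum.distrib)
  also have "\<dots> = (\<Sum>a<n. \<Sum>b<n. \<bar>int a - int b\<bar>) + 2 * (\<Sum>b<n. int n - int b)"
    using row row2 by simp
  finally show ?case using Suc.IH tri by (simp add: algebra_simps)
qed

theorem lemma1:
  fixes n :: nat and L :: "nat \<Rightarrow> nat \<Rightarrow> nat"
  assumes "n \<ge> 1" and "latin_square n L"
  shows "real_of_int (\<Sum>(r1, r2) \<in> {(r1, r2). r1 < r2 \<and> r2 < n}. row_dist n L r1 r2)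
           = real (n ^ 2 * (n ^ 2 - 1)) / 6"
proof -
  let ?P = "{(r1, r2). r1 < r2 \<and> r2 < n}"
  have LS: "\<forall>r<n. \<forall>c<n. L r c < n" "\<forall>r<n. \<forall>s<n. \<exists>!c. c < n \<and> L r c = s"
    "\<forall>c<n. \<forall>s<n. \<exists>!r. r < n \<and> L r c = s"
    using assms(2) unfolding latin_square_def by auto
  have posp: "pos n L r s < n \<and> L r (pos n L r s) = s" if "r < n" "s < n" for r s
    unfolding pos_def using theI'[OF LS(2)[rule_format, OF that]] .
  have bij: "bij_betw (\<lambda>r. pos n L r s) {..<n} {..<n}" if s: "s < n" for s
  proof -
    have inj: "inj_on (\<lambda>r. pos n L r s) {..<n}"
    proof (rule inj_onI)
      fix r1 r2 assume r: "r1 \<in> {..<n}" "r2 \<in> {..<n}" and eq: "pos n L r1 s = pos n L r2 s"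
      let ?c = "pos n L r1 s"
      have c: "?c < n" using posp r s by auto
      have "L r1 ?c = s" "L r2 ?c = s" using posp[of r1 s] posp[of r2 s] r s eq by auto
      then show "r1 = r2" using LS(3)[rule_format, OF c s] r by auto
    qed
    have sub: "(\<lambda>r. pos n L r s) ` {..<n} \<subseteq> {..<n}" using posp s by auto
    have "(\<lambda>r. pos n L r s) ` {..<n} = {..<n}"
      using endo_inj_surj[OF _ sub inj] by simp
    with inj show ?thesis unfolding bij_betw_def by simp
  qed
  have per_s: "3 * (2 * (\<Sum>(r1, r2) \<in> ?P. \<bar>int (pos n L r1 s) - int (pos n L r2 s)\<bar>))
      = (int n - 1) * int n * (int n + 1)" if s: "s < n" for s
  proof -
    let ?p = "\<lambda>r. pos n L r s"
    have "2 * (\<Sum>(r1, r2) \<in> ?P. \<bar>int (?p r1) - int (?p r2)\<bar>)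
        = (\<Sum>a<n. \<Sum>b<n. \<bar>int (?p a) - int (?p b)\<bar>)"
      by (rule sym_pair_sum) auto
    also have "\<dots> = (\<Sum>a<n. \<Sum>b<n. \<bar>int (?p a) - int b\<bar>)"
      by (rule sum.cong[OF refl], rule sum.reindex_bij_betw[OF bij[OF s], of "\<lambda>b. \<bar>int (?p _) - int b\<bar>"])
    also have "\<dots> = (\<Sum>a<n. \<Sum>b<n. \<bar>int a - int b\<bar>)"
      by (rule sum.reindex_bij_betw[OF bij[OF s], of "\<lambda>a. \<Sum>b<n. \<bar>int a - int b\<bar>"])
    finally show ?thesis using abs_sum_formula[of n] by simp
  qed
  have fP: "finite ?P" by (rule finite_subset[of _ "{..<n} \<times> {..<n}"]) auto
  have swap: "(\<Sum>(r1, r2) \<in> ?P. row_dist n L r1 r2)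
      = (\<Sum>s<n. \<Sum>(r1, r2) \<in> ?P. \<bar>int (pos n L r1 s) - int (pos n L r2 s)\<bar>)"
    unfolding row_dist_def case_prod_beta by (rule sum.swap)
  have "6 * (\<Sum>(r1, r2) \<in> ?P. row_dist n L r1 r2) = (\<Sum>s<n. (int n - 1) * int n * (int n + 1))"
    unfolding swap sum_distrib_left[of 6 "\<lambda>s. \<Sum>(r1, r2) \<in> ?P. \<bar>int (pos n L r1 s) - int (pos n L r2 s)\<bar>"]
    by (rule sum.cong[OF refl]) (use per_s in auto)
  also have "\<dots> = int n * ((int n - 1) * int n * (int n + 1))" by simp
  also have "\<dots> = int (n ^ 2 * (n ^ 2 - 1))"
  proof -
    have "n ^ 2 \<ge> 1" using assms(1) by simp
    then have "int (n ^ 2 - 1) = int n ^ 2 - 1" by (simp add: of_nat_diff)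
    then show ?thesis by (simp add: algebra_simps power2_eq_square)
  qed
  finally have "6 * (\<Sum>(r1, r2) \<in> ?P. row_dist n L r1 r2) = int (n ^ 2 * (n ^ 2 - 1))" .
  then have "real_of_int (6 * (\<Sum>(r1, r2) \<in> ?P. row_dist n L r1 r2)) = real (n ^ 2 * (n ^ 2 - 1))"
    by (metis of_int_of_nat_eq)
  then show ?thesis by simp
qed

end
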